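(* Let $\sigma>0$, $k\ge 0$ an integer, $\rho\ge 0$, and let $\mathcal{O}$ be a finite set of objects in $\mathbb{R}^d$ such that every subset $\mathcal{O}'\subseteq\mathcal{O}$ that is $\sigma$-exposed has density at most $\rho$. If $\mathcal{O}$ is $(\sigma,k)$-exposed, then the density of $\mathcal{O}$ is at most $(2k+1)\rho$.
   Context: For sets $X, Y\subseteq\mathbb{R}^d$ and $\sigma>0$, $X$ $\sigma$-shadows $Y$ if $\max_{q\in Y} \mathrm{dist}(q, X) \le \sigma\cdot \mathrm{diam}(Y)$, where $\mathrm{dist}(q,X)=\min_{p\in X}\|q-p\|$. A set of objects is $\sigma$-exposed if no object in the set $\sigma$-shadows another (distinct) object of the set. A set $\mathcal{O}$ of objects is $(\sigma,k)$-exposed if each object of $\mathcal{O}$ is $\sigma$-shadowed by at most $k$ other objects of $\mathcal{O}$. The density of a finite set $\mathcal{O}$ of objects in $\mathbb{R}^d$ is the maximum, over all closed balls $B$, of the number of objects $o\in\mathcal{O}$ that intersect $B$ and satisfy $\mathrm{diam}(o)\ge \mathrm{diam}(B)$. *)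

theory Defs
  imports "HOL-Analysis.Analysis"
begin

text \<open>X sigma-shadows Y: max over q in Y of dist(q,X) is at most sigma * diam(Y).
  The max/min of the paper are rendered as Sup / infdist (they coincide for compact objects).\<close>
definition shadows :: "real \<Rightarrow> 'a::euclidean_space set \<Rightarrow> 'a set \<Rightarrow> bool" where
  "shadows \<sigma> X Y \<longleftrightarrow> (SUP q\<in>Y. infdist q X) \<le> \<sigma> * diameter Y"

definition exposed :: "real \<Rightarrow> 'a::euclidean_space set set \<Rightarrow> bool" where
  "exposed \<sigma> \<O> \<longleftrightarrow> (\<forall>X\<in>\<O>. \<forall>Y\<in>\<O>. X \<noteq> Y \<longrightarrow> \<not> shadows \<sigma> X Y)"

definition k_exposed :: "real \<Rightarrow> nat \<Rightarrow> 'a::euclidean_space set set \<Rightarrow> bool" where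
  "k_exposed \<sigma> k \<O> \<longleftrightarrow> (\<forall>Y\<in>\<O>. card {X\<in>\<O>. X \<noteq> Y \<and> shadows \<sigma> X Y} \<le> k)"

definition density :: "'a::euclidean_space set set \<Rightarrow> nat" where
  "density \<O> = Max {card {Z\<in>\<O>. Z \<inter> cball c r \<noteq> {} \<and> diameter Z \<ge> diameter (cball c r)}
                     | c r. r > 0}"

end

theory Submission
  imports Defs
begin

lemma low_degree:
  fixes E :: "'b \<Rightarrow> 'b \<Rightarrow> bool"
  assumes fin: "finite S" and ne: "S \<noteq> {}"
    and indeg: "\<forall>v\<in>S. card {u\<in>S. u \<noteq> v \<and> E u v} \<le> k"
  shows "\<exists>v\<in>S. card {u\<in>S. u \<noteq> v \<and> (E u v \<or> E v u)} \<le> 2*k"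
proof (rule ccontr)
  assume "\<not> ?thesis"
  hence big: "\<forall>v\<in>S. 2*k + 1 \<le> card {u\<in>S. u \<noteq> v \<and> (E u v \<or> E v u)}" by auto
  define inn where "inn v = card {u\<in>S. u \<noteq> v \<and> E u v}" for v
  define out where "out v = card {u\<in>S. u \<noteq> v \<and> E v u}" for v
  have inn_eq: "inn v = (\<Sum>u\<in>S. if u \<noteq> v \<and> E u v then 1 else 0)" for v
    unfolding inn_def using fin by (simp add: sum.inter_filter[symmetric])
  have out_eq: "out v = (\<Sum>u\<in>S. if u \<noteq> v \<and> E v u then 1 else 0)" for v
    unfolding out_def using fin by (simp add: sum.inter_filter[symmetric])
  have "(\<Sum>v\<in>S. out v) = (\<Sum>v\<in>S. inn v)"
    unfolding out_eq inn_eq by (subst sum.swap) (auto intro!: sum.cong)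
  moreover have "(\<Sum>v\<in>S. inn v) \<le> card S * k"
    using sum_bounded_above[of S inn k] indeg inn_def by auto
  ultimately have A: "(\<Sum>v\<in>S. inn v + out v) \<le> 2 * (card S * k)"
    by (simp add: sum.distrib)
  have B: "(\<Sum>v\<in>S. card {u\<in>S. u \<noteq> v \<and> (E u v \<or> E v u)}) \<le> (\<Sum>v\<in>S. inn v + out v)"
  proof (rule sum_mono)
    fix v assume "v \<in> S"
    have "{u\<in>S. u \<noteq> v \<and> (E u v \<or> E v u)} = {u\<in>S. u \<noteq> v \<and> E u v} \<union> {u\<in>S. u \<noteq> v \<and> E v u}" (is "_ = ?A \<union> ?B") by auto
    moreover have "card (?A \<union> ?B) \<le> card ?A + card ?B" by (rule card_Un_le)
    ultimately show "card {u\<in>S. u \<noteq> v \<and> (E u v \<or> E v u)} \<le> inn v + out v"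
      by (simp only: inn_def out_def)
  qed
  have C: "card S * (2*k+1) \<le> (\<Sum>v\<in>S. card {u\<in>S. u \<noteq> v \<and> (E u v \<or> E v u)})"
    using sum_bounded_below[of S "2*k+1"] big by (auto simp: mult.commute)
  have D: "card S > 0" using fin ne by auto
  from A B C have "card S * (2*k+1) \<le> 2 * (card S * k)" by linarith
  with D show False by (simp add: algebra_simps)
qed

lemma coloring:
  fixes E :: "'b \<Rightarrow> 'b \<Rightarrow> bool"
  assumes "finite S"
  shows "(\<forall>v\<in>S. card {u\<in>S. u \<noteq> v \<and> E u v} \<le> k) \<longrightarrow>
    (\<exists>f. (\<forall>x\<in>S. \<forall>y\<in>S. x \<noteq> y \<and> E x y \<longrightarrow> f x \<noteq> f y) \<and> (\<forall>x\<in>S. f x \<le> 2*k))"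
  using assms
proof (induct S rule: finite_psubset_induct)
  case (psubset S)
  show ?case
  proof
    assume indeg: "\<forall>v\<in>S. card {u\<in>S. u \<noteq> v \<and> E u v} \<le> k"
    show "\<exists>f. (\<forall>x\<in>S. \<forall>y\<in>S. x \<noteq> y \<and> E x y \<longrightarrow> f x \<noteq> f y) \<and> (\<forall>x\<in>S. f x \<le> 2*k)"
    proof (cases "S = {}")
      case True thus ?thesis by auto
    next
      case False
      obtain v where v: "v \<in> S" and dv: "card {u\<in>S. u \<noteq> v \<and> (E u v \<or> E v u)} \<le> 2*k"
        using low_degree[OF psubset(1) False indeg] by blast
      define S' where "S' = S - {v}"
      have sub: "S' \<subset> S" using v S'_def by auto
      have "\<forall>w\<in>S'. card {u\<in>S'. u \<noteq> w \<and> E u w} \<le> k"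
      proof
        fix w assume "w \<in> S'"
        hence "card {u\<in>S'. u \<noteq> w \<and> E u w} \<le> card {u\<in>S. u \<noteq> w \<and> E u w}"
          using psubset(1) S'_def by (intro card_mono) auto
        thus "card {u\<in>S'. u \<noteq> w \<and> E u w} \<le> k" using indeg \<open>w \<in> S'\<close> S'_def by force
      qed
      then obtain f where f1: "\<forall>x\<in>S'. \<forall>y\<in>S'. x \<noteq> y \<and> E x y \<longrightarrow> f x \<noteq> f y"
        and f2: "\<forall>x\<in>S'. f x \<le> 2*k"
        using psubset(2)[OF sub] by blast
      define N where "N = {u\<in>S. u \<noteq> v \<and> (E u v \<or> E v u)}"
      have "card (f ` N) \<le> 2*k" using card_image_le[of N f] psubset(1) dv N_def by auto
      hence "\<not> {..2*k} \<subseteq> f ` N"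
        using card_mono[of "f ` N" "{..2*k}"] psubset(1) N_def by auto
      then obtain c where c: "c \<le> 2*k" "c \<notin> f ` N" by auto
      define g where "g = f(v := c)"
      have "\<forall>x\<in>S. \<forall>y\<in>S. x \<noteq> y \<and> E x y \<longrightarrow> g x \<noteq> g y"
      proof (intro ballI impI)
        fix x y assume xy: "x \<in> S" "y \<in> S" "x \<noteq> y \<and> E x y"
        show "g x \<noteq> g y"
        proof (cases "x = v")
          case True
          hence "y \<in> N" using xy N_def by auto
          thus ?thesis using True xy c g_def by auto
        next
          case F: False
          show ?thesis
          proof (cases "y = v")
            case True
            hence "x \<in> N" using xy N_def by auto
            thus ?thesis using True xy c g_def by auto
          next
            case False
            thus ?thesis using F xy f1 g_def S'_def by auto
          qed
        qed
      qed
      moreover have "\<forall>x\<in>S. g x \<le> 2*k" using f2 c g_def S'_def by auto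
      ultimately show ?thesis by blast
    qed
  qed
qed

abbreviation cnt :: "'a::euclidean_space set set \<Rightarrow> 'a \<Rightarrow> real \<Rightarrow> nat" where
  "cnt Os c r \<equiv> card {Z\<in>Os. Z \<inter> cball c r \<noteq> {} \<and> diameter Z \<ge> diameter (cball c r)}"

lemma dens_fin:
  assumes "finite Os"
  shows "finite {cnt Os c r | c r. r > 0}"
proof (rule finite_subset[of _ "{..card Os}"])
  show "{cnt Os c r | c r. r > 0} \<subseteq> {..card Os}"
    using assms by (auto intro!: card_mono)
qed auto

lemma dens_ge:
  assumes "finite Os" "r > 0"
  shows "cnt Os c r \<le> density Os"
  unfolding density_def using assms dens_fin[OF assms(1)] by (intro Max_ge) blast+

lemma dens_le:
  fixes Os :: "'a::euclidean_space set set"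
  assumes "finite Os" "\<And>c r. r > 0 \<Longrightarrow> cnt Os c r \<le> M"
  shows "density Os \<le> M"
  unfolding density_def
proof (rule Max.boundedI)
  show "finite {cnt Os c r | c r. r > 0}" using dens_fin[OF assms(1)] .
  show "{cnt Os c r | c r. r > 0} \<noteq> {}" by (auto intro: exI[of _ "1::real"])
qed (use assms(2) in auto)

lemma density_split:
  fixes Os :: "'a::euclidean_space set set"
  assumes fin: "finite Os" and fI: "finite I" and f: "\<forall>X\<in>Os. f X \<in> I"
  shows "density Os \<le> (\<Sum>i\<in>I. density {X\<in>Os. f X = i})"
proof (rule dens_le[OF fin])
  fix c :: 'a and r :: real assume r: "r > 0"
  let ?P = "\<lambda>Z. Z \<inter> cball c r \<noteq> {} \<and> diameter Z \<ge> diameter (cball c r)"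
  have eq: "{Z\<in>Os. ?P Z} = (\<Union>i\<in>I. {Z\<in>{X\<in>Os. f X = i}. ?P Z})" using f by auto
  have "cnt Os c r = (\<Sum>i\<in>I. cnt {X\<in>Os. f X = i} c r)"
    unfolding eq using fI fin by (subst card_UN_disjoint) auto
  also have "\<dots> \<le> (\<Sum>i\<in>I. density {X\<in>Os. f X = i})"
    using fin r by (intro sum_mono dens_ge) auto
  finally show "cnt Os c r \<le> (\<Sum>i\<in>I. density {X\<in>Os. f X = i})" .
qed

theorem mainTheorem9:
  fixes \<O> :: "'a::euclidean_space set set"
    and \<sigma> \<rho> :: real and k :: nat
  assumes "\<sigma> > 0" and "\<rho> \<ge> 0" and "finite \<O>"
    and "\<And>\<O>'. \<O>' \<subseteq> \<O> \<Longrightarrow> exposed \<sigma> \<O>' \<Longrightarrow> real (density \<O>') \<le> \<rho>"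
    and "k_exposed \<sigma> k \<O>"
  shows "real (density \<O>) \<le> (2 * real k + 1) * \<rho>"
proof -
  obtain f where f1: "\<forall>x\<in>\<O>. \<forall>y\<in>\<O>. x \<noteq> y \<and> shadows \<sigma> x y \<longrightarrow> f x \<noteq> f y"
    and f2: "\<forall>x\<in>\<O>. f x \<le> 2*k"
    using coloring[OF assms(3), where k=k and E="shadows \<sigma>"] assms(5) unfolding k_exposed_def by blast
  have exp: "exposed \<sigma> {X\<in>\<O>. f X = i}" for i
    unfolding exposed_def using f1 by blast
  have "density \<O> \<le> (\<Sum>i\<in>{..2*k}. density {X\<in>\<O>. f X = i})"
    using density_split[OF assms(3), of "{..2*k}" f] f2 by auto
  hence "real (density \<O>) \<le> (\<Sum>i\<in>{..2*k}. real (density {X\<in>\<O>. f X = i}))"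
    by (metis of_nat_le_iff of_nat_sum)
  also have "\<dots> \<le> (\<Sum>i\<in>{..2*k}. \<rho>)"
    using assms(4) exp by (intro sum_mono) auto
  also have "\<dots> = (2 * real k + 1) * \<rho>" by simp
  finally show ?thesis .
qed

end
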